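(* Let $\alpha,\beta$ be parameters and $q$ an indeterminate, and let $E_{n,k}(\alpha,\beta,q)$ ($n\ge k\ge 0$) be the numbers defined in the context. For all integers $n\geq k\geq 0$, \[ E_{n,k}(\alpha,\beta,q)=\sum_{\sigma\in\mathfrak{S}_{n+1,k}}[\alpha]^{\mathrm{lrmin}(\sigma)-1}[\beta]^{\mathrm{rlmin}(\sigma)-1}q^{\widetilde{\mathrm{maj}}(\sigma)}, \] where $\mathfrak{S}_{n+1,k}$ is the set of permutations of $\{1,\dots,n+1\}$ with exactly $k$ descents and, for $\sigma\in\mathfrak{S}_{n+1}$, \[ \widetilde{\mathrm{maj}}(\sigma)=(1+\mathrm{des}(\sigma)-\mathrm{lrmin}(\sigma))(\alpha-1)+(n+1-\mathrm{rlmin}(\sigma))(\beta-1)+\mathrm{maj}(\sigma). \]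
   Context: For a real $x$, $[x]=\frac{1-q^x}{1-q}$. The numbers $E_{n,k}(\alpha,\beta,q)$ (in the paper, $E_{n,k}(\alpha,\beta,q)=A(k,n-k\,|\,\alpha,\beta)_q$, Gaudin's $q$-analogue of the Carlitz–Scoville numbers obtained by normalizing Nadeau–Tewari remixed Eulerian numbers) are determined by $E_{0,0}=1$, $E_{n,k}=0$ if $k\notin\{0,\dots,n\}$, and for $n\ge1$ \[ E_{n,k}(\alpha,\beta,q)=q^{\beta+k-1}[n-k+\alpha]E_{n-1,k-1}(\alpha,\beta,q)+[k+\beta]E_{n-1,k}(\alpha,\beta,q). \] For $\sigma=\sigma_1\cdots\sigma_m\in\mathfrak{S}_m$: $\mathrm{des}(\sigma)=|\{i\in[m-1]:\sigma_i>\sigma_{i+1}\}|$; $\mathrm{maj}(\sigma)=\sum_{\sigma_i>\sigma_{i+1}}i$; $\mathrm{lrmin}(\sigma)=|\{i:\sigma_i<\sigma_j\ \forall j<i\}|$ (left-to-right minima); $\mathrm{rlmin}(\sigma)=|\{i:\sigma_i<\sigma_j\ \forall j>i\}|$ (right-to-left minima). *)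

theory Defs
  imports Complex_Main "HOL-Combinatorics.Multiset_Permutations"
begin

definition qint :: "real \<Rightarrow> real \<Rightarrow> real" where
  "qint q x = (1 - q powr x) / (1 - q)"

fun E :: "real \<Rightarrow> real \<Rightarrow> real \<Rightarrow> nat \<Rightarrow> nat \<Rightarrow> real" where
  "E a b q 0 k = (if k = 0 then 1 else 0)"
| "E a b q (Suc n) k =
     (if k = 0 then 0
      else q powr (b + real k - 1) * qint q (real (Suc n) - real k + a) * E a b q n (k - 1))
     + qint q (real k + b) * E a b q n k"

text \<open>Permutation statistics on words (lists); positions are 1-based as in the paper,
  list index i corresponds to position i+1.\<close>
definition descents :: "nat list \<Rightarrow> nat set" where
  "descents s = {i. Suc i < length s \<and> s ! i > s ! Suc i}"

definition des :: "nat list \<Rightarrow> nat" where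
  "des s = card (descents s)"

definition maj :: "nat list \<Rightarrow> nat" where
  "maj s = (\<Sum>i\<in>descents s. Suc i)"

definition lrmin :: "nat list \<Rightarrow> nat" where
  "lrmin s = card {i. i < length s \<and> (\<forall>j<i. s ! i < s ! j)}"

definition rlmin :: "nat list \<Rightarrow> nat" where
  "rlmin s = card {i. i < length s \<and> (\<forall>j. i < j \<and> j < length s \<longrightarrow> s ! i < s ! j)}"

definition majt :: "real \<Rightarrow> real \<Rightarrow> nat \<Rightarrow> nat list \<Rightarrow> real" where
  "majt a b n s = (1 + real (des s) - real (lrmin s)) * (a - 1)
                 + (real (n + 1) - real (rlmin s)) * (b - 1) + real (maj s)"

end

theory Submission
  imports Defs
begin


definition ins :: "nat \<Rightarrow> nat \<Rightarrow> nat list \<Rightarrow> nat list" where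
  "ins m i s = take i s @ m # drop i s"

lemma ins_length[simp]: "length (ins m i s) = Suc (length s)"
  by (simp add: ins_def)

lemma ins_nth:
  assumes "i \<le> length s" "j < Suc (length s)"
  shows "ins m i s ! j = (if j < i then s ! j else if j = i then m else s ! (j - 1))"
  using assms by (auto simp: ins_def nth_append min_def nth_Cons' nth_drop)

lemma descents_ins:
  assumes "i \<le> length s" "\<forall>x\<in>set s. x < m"
  shows "descents (ins m i s) = {j\<in>descents s. Suc j < i} \<union> {j. j = i \<and> i < length s}
     \<union> Suc ` {j\<in>descents s. i \<le> j}"
proof (rule set_eqI)
  fix j
  have mem: "\<And>p. p < length s \<Longrightarrow> s ! p < m" using assms(2) by auto
  show "j \<in> descents (ins m i s) \<longleftrightarrow> j \<in> {j\<in>descents s. Suc j < i} \<union> {j. j = i \<and> i < length s}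
     \<union> Suc ` {j\<in>descents s. i \<le> j}"
  proof (cases "j < i")
    case True
    then have "j < length s" using assms(1) by simp
    then have "\<not> m < s ! j" using mem[of j] by auto
    then show ?thesis using assms True by (auto simp: descents_def ins_nth)
  next
    case False
    show ?thesis
    proof (cases "j = i")
      case True
      then show ?thesis using assms mem[of i] by (auto simp: descents_def ins_nth)
    next
      case False
      then obtain p where p: "j = Suc p" "i \<le> p" using \<open>\<not> j < i\<close>
        by (metis less_imp_Suc_add linorder_neqE_nat add.commute plus_1_eq_Suc le_add2)
      then show ?thesis using assms by (auto simp: descents_def ins_nth)
    qed
  qed
qed

definition LR :: "nat list \<Rightarrow> nat set" where
  "LR s = {i. i < length s \<and> (\<forall>j<i. s ! i < s ! j)}"
definition RL :: "nat list \<Rightarrow> nat set" where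
  "RL s = {i. i < length s \<and> (\<forall>j. i < j \<and> j < length s \<longrightarrow> s ! i < s ! j)}"

definition shf :: "nat \<Rightarrow> nat \<Rightarrow> nat" where
  "shf i j = (if j < i then j else Suc j)"

lemma inj_shf: "inj (shf i)"
  unfolding inj_def shf_def by auto

lemma LR_ins:
  assumes "i \<le> length s" "\<forall>x\<in>set s. x < m"
  shows "LR (ins m i s) = shf i ` LR s \<union> (if i = 0 then {0} else {})"
proof (rule set_eqI)
  fix j
  have mem: "\<And>p. p < length s \<Longrightarrow> s ! p < m" using assms(2) by auto
  show "j \<in> LR (ins m i s) \<longleftrightarrow> j \<in> shf i ` LR s \<union> (if i = 0 then {0} else {})"
  proof (cases "j < i")
    case True
    have "j \<in> LR (ins m i s) \<longleftrightarrow> j \<in> LR s"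
      using True assms by (auto simp: LR_def ins_nth)
    moreover have "j \<in> shf i ` LR s \<longleftrightarrow> j \<in> LR s"
      using True by (auto simp: shf_def LR_def)
    ultimately show ?thesis using True by auto
  next
    case False
    show ?thesis
    proof (cases "j = i")
      case True
      have "j \<notin> shf i ` LR s" using True by (auto simp: shf_def)
      moreover have "j \<in> LR (ins m i s) \<longleftrightarrow> i = 0"
      proof
        assume "j \<in> LR (ins m i s)"
        then have "\<forall>j'<i. m < ins m i s ! j'" using True assms by (auto simp: LR_def ins_nth)
        show "i = 0"
        proof (rule ccontr)
          assume "i \<noteq> 0"
          then have "m < ins m i s ! 0" "0 < length s" using \<open>\<forall>j'<i. m < ins m i s ! j'\<close> assms(1) by auto
          then show False using mem[of 0] assms(1) \<open>i \<noteq> 0\<close> by (simp add: ins_nth)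
        qed
      next
        assume "i = 0" then show "j \<in> LR (ins m i s)" using True by (auto simp: LR_def)
      qed
      ultimately show ?thesis using True by auto
    next
      case False
      then obtain p where p: "j = Suc p" "i \<le> p" using \<open>\<not> j < i\<close>
        by (metis less_imp_Suc_add linorder_neqE_nat add.commute plus_1_eq_Suc le_add2)
      have "j \<in> shf i ` LR s \<longleftrightarrow> p \<in> LR s"
        using p by (auto simp: shf_def image_iff)
      moreover have "j \<in> LR (ins m i s) \<longleftrightarrow> p \<in> LR s"
      proof
        assume a: "j \<in> LR (ins m i s)"
        have "p < length s" using a p by (auto simp: LR_def)
        moreover have "s ! p < s ! j'" if "j' < p" for j'
        proof (cases "j' < i")
          case True
          have "ins m i s ! j < ins m i s ! j'" using a p that by (auto simp: LR_def)
          then show ?thesis using True p that assms \<open>p < length s\<close> by (auto simp: ins_nth)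
        next
          case False
          have "ins m i s ! j < ins m i s ! Suc j'" using a p that by (auto simp: LR_def)
          then show ?thesis using False p that assms \<open>p < length s\<close> by (auto simp: ins_nth)
        qed
        ultimately show "p \<in> LR s" by (auto simp: LR_def)
      next
        assume a: "p \<in> LR s"
        have "p < length s" using a by (auto simp: LR_def)
        have "ins m i s ! j < ins m i s ! j'" if "j' < j" for j'
        proof -
          consider "j' < i" | "j' = i" | "i < j'" by linarith
          then show ?thesis
          proof cases
            case 1 then show ?thesis using a p that assms by (auto simp: LR_def ins_nth)
          next
            case 2 then show ?thesis using p that assms mem[OF \<open>p < length s\<close>] \<open>p < length s\<close> by (auto simp: ins_nth)
          next
            case 3 then show ?thesis using a p that assms by (auto simp: LR_def ins_nth)
          qed
        qed
        then show "j \<in> LR (ins m i s)" using p \<open>p < length s\<close> by (auto simp: LR_def)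
      qed
      ultimately show ?thesis using p by auto
    qed
  qed
qed

lemma RL_ins:
  assumes "i \<le> length s" "\<forall>x\<in>set s. x < m"
  shows "RL (ins m i s) = shf i ` RL s \<union> (if i = length s then {length s} else {})"
proof (rule set_eqI)
  fix j
  have mem: "\<And>p. p < length s \<Longrightarrow> s ! p < m" using assms(2) by auto
  show "j \<in> RL (ins m i s) \<longleftrightarrow> j \<in> shf i ` RL s \<union> (if i = length s then {length s} else {})"
  proof (cases "j < i")
    case True
    have jl: "j < length s" using True assms(1) by simp
    have "j \<in> RL (ins m i s) \<longleftrightarrow> j \<in> RL s"
    proof
      assume a: "j \<in> RL (ins m i s)"
      have "s ! j < s ! j'" if "j < j'" "j' < length s" for j'
      proof (cases "j' < i")
        case True
        have "ins m i s ! j < ins m i s ! j'" using a that by (auto simp: RL_def)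
        then show ?thesis using True \<open>j < i\<close> assms by (auto simp: ins_nth)
      next
        case False
        have "ins m i s ! j < ins m i s ! Suc j'" using a that by (auto simp: RL_def)
        then show ?thesis using False \<open>j < i\<close> assms that by (auto simp: ins_nth)
      qed
      then show "j \<in> RL s" using jl by (auto simp: RL_def)
    next
      assume a: "j \<in> RL s"
      have "ins m i s ! j < ins m i s ! j'" if "j < j'" "j' < Suc (length s)" for j'
      proof -
        consider "j' < i" | "j' = i" | "i < j'" by linarith
        then show ?thesis
        proof cases
          case 1 then show ?thesis using a that True assms by (auto simp: RL_def ins_nth)
        next
          case 2 then show ?thesis using that True assms mem[OF jl] jl by (auto simp: ins_nth)
        next
          case 3
          then obtain r where r: "j' = Suc r" "i \<le> r" by (cases j') auto
          then show ?thesis using a that True assms by (auto simp: RL_def ins_nth)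
        qed
      qed
      then show "j \<in> RL (ins m i s)" using jl by (auto simp: RL_def)
    qed
    moreover have "j \<in> shf i ` RL s \<longleftrightarrow> j \<in> RL s"
      using True by (auto simp: shf_def RL_def)
    ultimately show ?thesis using True jl by auto
  next
    case False
    show ?thesis
    proof (cases "j = i")
      case True
      have "j \<notin> shf i ` RL s" using True by (auto simp: shf_def)
      moreover have "j \<in> RL (ins m i s) \<longleftrightarrow> i = length s"
      proof
        assume a: "j \<in> RL (ins m i s)"
        show "i = length s"
        proof (rule ccontr)
          assume "i \<noteq> length s"
          then have il: "i < length s" using assms(1) by simp
          have "ins m i s ! j < ins m i s ! Suc i" using a True il by (auto simp: RL_def)
          then show False using mem[OF il] il True by (simp add: ins_nth)
        qed
      next
        assume "i = length s" then show "j \<in> RL (ins m i s)" using True by (auto simp: RL_def)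
      qed
      ultimately show ?thesis using True by auto
    next
      case False
      then obtain p where p: "j = Suc p" "i \<le> p" using \<open>\<not> j < i\<close>
        by (metis less_imp_Suc_add linorder_neqE_nat add.commute plus_1_eq_Suc le_add2)
      have "j \<in> shf i ` RL s \<longleftrightarrow> p \<in> RL s"
        using p by (auto simp: shf_def image_iff)
      moreover have "j \<in> RL (ins m i s) \<longleftrightarrow> p \<in> RL s"
      proof
        assume a: "j \<in> RL (ins m i s)"
        have pl: "p < length s" using a p by (auto simp: RL_def)
        have "s ! p < s ! j'" if "p < j'" "j' < length s" for j'
        proof -
          have "ins m i s ! j < ins m i s ! Suc j'" using a p that by (auto simp: RL_def)
          then show ?thesis using p that assms pl by (auto simp: ins_nth)
        qed
        then show "p \<in> RL s" using pl by (auto simp: RL_def)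
      next
        assume a: "p \<in> RL s"
        have pl: "p < length s" using a by (auto simp: RL_def)
        have "ins m i s ! j < ins m i s ! j'" if jj: "j < j'" "j' < Suc (length s)" for j'
        proof -
          obtain r where r: "j' = Suc r" "p < r" using jj p by (cases j') auto
          then show ?thesis using a p that assms pl by (auto simp: RL_def ins_nth)
        qed
        then show "j \<in> RL (ins m i s)" using p pl by (auto simp: RL_def)
      qed
      ultimately show ?thesis using p assms(1) by auto
    qed
  qed
qed

lemma finite_LR: "finite (LR s)"
  by (rule finite_subset[of _ "{..<length s}"]) (auto simp: LR_def)
lemma finite_RL: "finite (RL s)"
  by (rule finite_subset[of _ "{..<length s}"]) (auto simp: RL_def)
lemma finite_descents: "finite (descents s)"
  by (rule finite_subset[of _ "{..<length s}"]) (auto simp: descents_def)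

lemma lrmin_LR: "lrmin s = card (LR s)" unfolding lrmin_def LR_def ..
lemma rlmin_RL: "rlmin s = card (RL s)" unfolding rlmin_def RL_def ..

lemma lrmin_ins:
  assumes "i \<le> length s" "\<forall>x\<in>set s. x < m"
  shows "lrmin (ins m i s) = lrmin s + (if i = 0 then 1 else 0)"
proof -
  have "0 \<notin> shf i ` LR s" if "i = 0" using that by (auto simp: shf_def)
  then show ?thesis unfolding lrmin_LR LR_ins[OF assms]
    using finite_LR[of s] card_image[OF inj_on_subset[OF inj_shf subset_UNIV], of i "LR s"]
    by auto
qed

lemma rlmin_ins:
  assumes "i \<le> length s" "\<forall>x\<in>set s. x < m"
  shows "rlmin (ins m i s) = rlmin s + (if i = length s then 1 else 0)"
proof -
  have "length s \<notin> shf i ` RL s" if "i = length s" using that by (auto simp: shf_def RL_def)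
  then show ?thesis unfolding rlmin_RL RL_ins[OF assms]
    using finite_RL[of s] card_image[OF inj_on_subset[OF inj_shf subset_UNIV], of i "RL s"]
    by auto
qed

lemma split3':
  fixes f :: "nat \<Rightarrow> 'b::comm_monoid_add"
  assumes "finite D"
  shows "sum f D = sum f {j\<in>D. j < x} + (if x \<in> D then f x else 0) + sum f {j\<in>D. x < j}"
proof -
  have "sum f D = sum (\<lambda>j. (if j < x then f j else 0) + (if j = x then f j else 0) + (if x < j then f j else 0)) D"
    by (rule sum.cong) auto
  also have "\<dots> = sum (\<lambda>j. if j < x then f j else 0) D + sum (\<lambda>j. if j = x then f j else 0) D + sum (\<lambda>j. if x < j then f j else 0) D"
    by (simp add: sum.distrib)
  also have "\<dots> = sum f {j\<in>D. j < x} + (if x \<in> D then f x else 0) + sum f {j\<in>D. x < j}"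
    using assms by (simp add: sum.inter_filter sum.delta)
  finally show ?thesis .
qed

lemma split3:
  fixes f :: "nat \<Rightarrow> 'b::comm_monoid_add"
  assumes "finite D"
  shows "sum f D = sum f {j\<in>D. Suc j < i} + (if 0 < i \<and> i - 1 \<in> D then f (i - 1) else 0)
     + sum f {j\<in>D. i \<le> j}"
proof (cases i)
  case 0
  then show ?thesis by simp
next
  case (Suc x)
  have "{j\<in>D. Suc x \<le> j} = {j\<in>D. x < j}" by auto
  then show ?thesis using split3'[OF assms, of f x] Suc by simp
qed
lemma sum_descents_ins:
  fixes f :: "nat \<Rightarrow> 'b::comm_monoid_add"
  assumes "i \<le> length s" "\<forall>x\<in>set s. x < m"
  shows "sum f (descents (ins m i s)) = sum f {j\<in>descents s. Suc j < i}
     + (if i < length s then f i else 0) + sum (\<lambda>j. f (Suc j)) {j\<in>descents s. i \<le> j}"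
proof -
  have fin: "finite (descents s)" by (rule finite_descents)
  let ?A = "{j\<in>descents s. Suc j < i}" and ?B = "{j. j = i \<and> i < length s}" and ?C = "Suc ` {j\<in>descents s. i \<le> j}"
  have fA: "finite ?A" and fB: "finite ?B" and fC: "finite ?C" using fin by simp_all
  have d1: "?A \<inter> ?B = {}" by (simp add: disjoint_iff)
  have d2: "(?A \<union> ?B) \<inter> ?C = {}" by (auto simp: disjoint_iff)
  have "sum f (descents (ins m i s)) = sum f (?A \<union> ?B \<union> ?C)" unfolding descents_ins[OF assms] ..
  also have "\<dots> = sum f (?A \<union> ?B) + sum f ?C"
    by (rule sum.union_disjoint) (use fA fB fC d2 in simp_all)
  also have "sum f (?A \<union> ?B) = sum f ?A + sum f ?B"
    by (rule sum.union_disjoint) (use fA fB d1 in simp_all)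
  finally have "sum f (descents (ins m i s)) = sum f ?A + sum f ?B + sum f ?C" .
  moreover have "?B = (if i < length s then {i} else {})" by auto
  moreover have "sum f ?C = sum (\<lambda>j. f (Suc j)) {j\<in>descents s. i \<le> j}"
    by (subst sum.reindex) auto
  ultimately show ?thesis by simp
qed

lemma des_ins:
  assumes "i \<le> length s" "\<forall>x\<in>set s. x < m"
  shows "des (ins m i s) + (if 0 < i \<and> i - 1 \<in> descents s then 1 else 0)
       = des s + (if i < length s then 1 else 0)"
proof -
  have h1: "des (ins m i s) = card {j\<in>descents s. Suc j < i} + (if i < length s then 1 else 0)
      + card {j\<in>descents s. i \<le> j}"
    using sum_descents_ins[OF assms, of "\<lambda>_. 1::nat"] unfolding des_def by simp
  have h2: "des s = card {j\<in>descents s. Suc j < i} + (if 0 < i \<and> i - 1 \<in> descents s then 1 else 0)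
      + card {j\<in>descents s. i \<le> j}"
    using split3[OF finite_descents, of "\<lambda>_. 1::nat" s i] unfolding des_def by simp
  show ?thesis unfolding h1 h2 by simp
qed

lemma maj_ins:
  assumes "i \<le> length s" "\<forall>x\<in>set s. x < m"
  shows "maj (ins m i s) + (if 0 < i \<and> i - 1 \<in> descents s then i else 0)
       = maj s + (if i < length s then Suc i else 0) + card {j\<in>descents s. i \<le> j}"
proof -
  have h0: "sum (\<lambda>j. Suc (Suc j)) {j\<in>descents s. i \<le> j} = sum Suc {j\<in>descents s. i \<le> j} + card {j\<in>descents s. i \<le> j}"
  proof -
    have "sum (\<lambda>j. Suc j + 1) {j\<in>descents s. i \<le> j} = sum Suc {j\<in>descents s. i \<le> j} + sum (\<lambda>_. 1) {j\<in>descents s. i \<le> j}"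
      by (rule sum.distrib)
    then show ?thesis by simp
  qed
  have h1: "maj (ins m i s) = sum Suc {j\<in>descents s. Suc j < i} + (if i < length s then Suc i else 0)
      + sum (\<lambda>j. Suc (Suc j)) {j\<in>descents s. i \<le> j}"
    using sum_descents_ins[OF assms, of Suc] unfolding maj_def by simp
  have h2: "maj s = sum Suc {j\<in>descents s. Suc j < i} + (if 0 < i \<and> i - 1 \<in> descents s then Suc (i - 1) else 0)
      + sum Suc {j\<in>descents s. i \<le> j}"
    using split3[OF finite_descents, of Suc s i] unfolding maj_def by simp
  have h3: "(if 0 < i \<and> i - 1 \<in> descents s then Suc (i - 1) else 0) = (if 0 < i \<and> i - 1 \<in> descents s then i else 0)"
    by simp
  show ?thesis unfolding h1 h2 h0 h3 by simp
qed

lemma rank_lt_bij: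
  assumes "finite (S::nat set)"
  shows "bij_betw (\<lambda>x. card {y\<in>S. y < x}) S {..<card S}"
proof -
  let ?f = "\<lambda>x. card {y\<in>S. y < x}"
  have inj: "inj_on ?f S"
  proof (rule linorder_inj_onI)
    fix x x' assume "x < x'" "x \<in> S" "x' \<in> S"
    have "{y\<in>S. y < x} \<subset> {y\<in>S. y < x'}" using \<open>x < x'\<close> \<open>x \<in> S\<close> by auto
    then have "?f x < ?f x'" by (rule psubset_card_mono[rotated]) (use assms in auto)
    then show "?f x \<noteq> ?f x'" by simp
  qed auto
  have sub: "?f ` S \<subseteq> {..<card S}"
  proof
    fix c assume "c \<in> ?f ` S"
    then obtain x where "x \<in> S" "c = ?f x" by auto
    moreover have "{y\<in>S. y < x} \<subset> S" using \<open>x \<in> S\<close> by auto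
    ultimately show "c \<in> {..<card S}" using psubset_card_mono[OF assms] by auto
  qed
  have "card (?f ` S) = card {..<card S}" using card_image[OF inj] by simp
  then have "?f ` S = {..<card S}" using sub by (intro card_subset_eq) auto
  then show ?thesis using inj by (simp add: bij_betw_def)
qed

lemma rank_gt_bij:
  assumes "finite (S::nat set)"
  shows "bij_betw (\<lambda>x. card {y\<in>S. x < y}) S {..<card S}"
proof -
  let ?f = "\<lambda>x. card {y\<in>S. x < y}"
  have inj: "inj_on ?f S"
  proof (rule linorder_inj_onI)
    fix x x' assume "x < x'" "x \<in> S" "x' \<in> S"
    have "{y\<in>S. x' < y} \<subset> {y\<in>S. x < y}" using \<open>x < x'\<close> \<open>x' \<in> S\<close> by auto
    then have "?f x' < ?f x" by (rule psubset_card_mono[rotated]) (use assms in auto)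
    then show "?f x \<noteq> ?f x'" by simp
  qed auto
  have sub: "?f ` S \<subseteq> {..<card S}"
  proof
    fix c assume "c \<in> ?f ` S"
    then obtain x where "x \<in> S" "c = ?f x" by auto
    moreover have "{y\<in>S. x < y} \<subset> S" using \<open>x \<in> S\<close> by auto
    ultimately show "c \<in> {..<card S}" using psubset_card_mono[OF assms] by auto
  qed
  have "card (?f ` S) = card {..<card S}" using card_image[OF inj] by simp
  then have "?f ` S = {..<card S}" using sub by (intro card_subset_eq) auto
  then show ?thesis using inj by (simp add: bij_betw_def)
qed

lemma qint_step:
  assumes "0 < q" "q \<noteq> 1"
  shows "qint q x + (\<Sum>c<n. q powr (x + real c)) = qint q (real n + x)"
proof (induction n)
  case 0 then show ?case by simp
next
  case (Suc n)
  have "qint q (real n + x) + q powr (real n + x) = qint q (real (Suc n) + x)"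
  proof -
    have "q powr (real (Suc n) + x) = q powr (real n + x) * q"
      using assms by (simp add: powr_add algebra_simps)
    then show ?thesis using assms by (simp add: qint_def field_simps)
  qed
  then show ?case using Suc by (simp add: add.commute)
qed

lemma set_ins: "set (ins m i s) = insert m (set s)"
proof -
  have "set s = set (take i s) \<union> set (drop i s)" using set_append[of "take i s" "drop i s"] by simp
  then show ?thesis unfolding ins_def set_append by auto
qed

lemma distinct_ins: "distinct (ins m i s) \<longleftrightarrow> distinct s \<and> m \<notin> set s"
proof -
  have "set s = set (take i s) \<union> set (drop i s)" using set_append[of "take i s" "drop i s"] by simp
  moreover have "distinct s \<longleftrightarrow> distinct (take i s @ drop i s)" by simp
  ultimately show ?thesis unfolding ins_def distinct_append distinct.simps set_simps by blast
qed
lemma perm_ins_bij: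
  "bij_betw (\<lambda>(s,i). ins (Suc L) i s) (permutations_of_set {1..L} \<times> {0..L}) (permutations_of_set {1..Suc L})"
proof -
  have len: "length s = L" if "s \<in> permutations_of_set {1..L}" for s
    using that distinct_card[of s] by (auto simp: permutations_of_set_def)
  have nm: "Suc L \<notin> set s" if "s \<in> permutations_of_set {1..L}" for s
    using that by (auto simp: permutations_of_set_def)
  show ?thesis
  proof (rule bij_betwI')
    fix x y assume x: "x \<in> permutations_of_set {1..L} \<times> {0..L}" and y: "y \<in> permutations_of_set {1..L} \<times> {0..L}"
    obtain s i where xs: "x = (s,i)" by (cases x)
    obtain s' i' where ys: "y = (s',i')" by (cases y)
    have "Suc L \<notin> set (take i s)" "Suc L \<notin> set (take i' s')" "Suc L \<notin> set (drop i s)"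
      using nm[of s] nm[of s'] x y xs ys in_set_takeD in_set_dropD by fastforce+
    then have "ins (Suc L) i s = ins (Suc L) i' s' \<longleftrightarrow> take i s = take i' s' \<and> drop i s = drop i' s'"
      unfolding ins_def by (simp add: append_Cons_eq_iff)
    also have "\<dots> \<longleftrightarrow> s = s' \<and> i = i'"
    proof
      assume a: "take i s = take i' s' \<and> drop i s = drop i' s'"
      then have "length (take i s) = length (take i' s')" by simp
      then have "i = i'" using len[of s] len[of s'] x y xs ys by auto
      moreover have "s = s'" using a by (metis append_take_drop_id)
      ultimately show "s = s' \<and> i = i'" by simp
    qed simp
    finally show "((\<lambda>(s,i). ins (Suc L) i s) x = (\<lambda>(s,i). ins (Suc L) i s) y) = (x = y)"
      using xs ys by simp
  next
    fix x assume x: "x \<in> permutations_of_set {1..L} \<times> {0..L}"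
    obtain s i where xs: "x = (s,i)" by (cases x)
    have "set s = {1..L}" "distinct s" using x xs by (auto simp: permutations_of_set_def)
    moreover have "Suc L \<notin> set s" using nm x xs by auto
    ultimately show "(\<lambda>(s,i). ins (Suc L) i s) x \<in> permutations_of_set {1..Suc L}"
      using xs by (auto simp: permutations_of_set_def set_ins distinct_ins)
  next
    fix t assume t: "t \<in> permutations_of_set {1..Suc L}"
    then have "Suc L \<in> set t" "distinct t" "set t = {1..Suc L}" by (auto simp: permutations_of_set_def)
    then obtain xs ys where t': "t = xs @ Suc L # ys" by (meson split_list)
    let ?s = "xs @ ys"
    have "distinct ?s" "Suc L \<notin> set ?s" using \<open>distinct t\<close> t' by auto
    moreover have "set ?s = {1..L}"
    proof -
      have "insert (Suc L) (set ?s) = {1..Suc L}" using \<open>set t = _\<close> t' by auto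
      then have "set ?s = {1..Suc L} - {Suc L}" using \<open>Suc L \<notin> set ?s\<close> by blast
      moreover have "{1..Suc L} - {Suc L} = {1..L}" by auto
      ultimately show ?thesis by simp
    qed
    ultimately have s: "?s \<in> permutations_of_set {1..L}" by (auto simp: permutations_of_set_def)
    have "length xs \<le> L" using len[OF s] by simp
    moreover have "ins (Suc L) (length xs) ?s = t" using t' by (simp add: ins_def)
    ultimately show "\<exists>x\<in>permutations_of_set {1..L} \<times> {0..L}. t = (\<lambda>(s,i). ins (Suc L) i s) x"
      using s by (intro bexI[of _ "(?s, length xs)"]) auto
  qed
qed




definition Wt :: "real \<Rightarrow> real \<Rightarrow> real \<Rightarrow> nat \<Rightarrow> nat list \<Rightarrow> real" where
  "Wt a b q N s = qint q a ^ (lrmin s - 1) * qint q b ^ (rlmin s - 1) * q powr majt a b N s"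

lemma Wt_step:
  assumes "0 < q" "lrmin s \<ge> 1" "rlmin s \<ge> 1" "lrmin t = lrmin s + x" "rlmin t = rlmin s + y"
    "majt a b (Suc N) t = majt a b N s + z"
  shows "Wt a b q (Suc N) t = Wt a b q N s * qint q a ^ x * qint q b ^ y * q powr z"
proof -
  have "lrmin t - 1 = (lrmin s - 1) + x" "rlmin t - 1 = (rlmin s - 1) + y" using assms by auto
  then show ?thesis unfolding Wt_def assms(6) by (simp add: power_add powr_add)
qed

lemma majt_diff:
  "majt a b (Suc N) t = majt a b N s + ((real (des t) - real (des s) - real (lrmin t) + real (lrmin s)) * (a - 1)
     + (1 - real (rlmin t) + real (rlmin s)) * (b - 1) + (real (maj t) - real (maj s)))"
  unfolding majt_def by (simp add: algebra_simps)

lemma LR_ne: "s \<noteq> [] \<Longrightarrow> lrmin s \<ge> 1"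
proof -
  assume "s \<noteq> []"
  then have "0 \<in> LR s" by (auto simp: LR_def)
  then have "LR s \<noteq> {}" by auto
  then show ?thesis unfolding lrmin_LR using finite_LR[of s] by (simp add: Suc_le_eq card_gt_0_iff)
qed

lemma RL_ne: "s \<noteq> [] \<Longrightarrow> rlmin s \<ge> 1"
proof -
  assume "s \<noteq> []"
  then have "length s - 1 \<in> RL s" by (auto simp: RL_def)
  then have "RL s \<noteq> {}" by auto
  then show ?thesis unfolding rlmin_RL using finite_RL[of s] by (simp add: Suc_le_eq card_gt_0_iff)
qed

lemma asc_rank:
  assumes "finite D" "0 < i" "i - 1 \<notin> D"
  shows "i + card {j\<in>D. i \<le> j} = card D + 1 + card {y. 0 < y \<and> y < i \<and> y - 1 \<notin> D}"
proof -
  let ?P1 = "{y. 0 < y \<and> y < i \<and> y - 1 \<in> D}" and ?P2 = "{y. 0 < y \<and> y < i \<and> y - 1 \<notin> D}"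
  have eq: "{1..<i} = ?P1 \<union> ?P2" by auto
  have dj: "?P1 \<inter> ?P2 = {}" by auto
  have f: "finite ?P1" "finite ?P2" by (auto intro: finite_subset[of _ "{..<i}"])
  have "i - 1 = card {1..<i}" by simp
  also have "\<dots> = card (?P1 \<union> ?P2)" using eq by simp
  also have "\<dots> = card ?P1 + card ?P2" using card_Un_disjoint[OF f dj] .
  finally have c1: "i - 1 = card ?P1 + card ?P2" .
  have "?P1 = Suc ` {j\<in>D. Suc j < i}"
  proof (intro equalityI subsetI)
    fix y assume "y \<in> ?P1" then show "y \<in> Suc ` {j\<in>D. Suc j < i}"
      by (intro image_eqI[of _ _ "y - 1"]) auto
  qed auto
  then have c2: "card ?P1 = card {j\<in>D. Suc j < i}" by (simp add: card_image)
  have c3: "card D = card {j\<in>D. Suc j < i} + card {j\<in>D. i \<le> j}"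
    using split3[OF assms(1), of "\<lambda>_. 1::nat" i] assms(3) by simp
  show ?thesis using c1 c2 c3 assms(2) by linarith
qed

lemma card_asc:
  assumes "finite D" "\<forall>j\<in>D. Suc j < L"
  shows "card {y. 0 < y \<and> y < L \<and> y - 1 \<notin> D} = L - 1 - card D"
    and "{y. 0 < y \<and> y < L \<and> y - 1 \<in> D} = Suc ` D"
proof -
  let ?P1 = "{y. 0 < y \<and> y < L \<and> y - 1 \<in> D}" and ?P2 = "{y. 0 < y \<and> y < L \<and> y - 1 \<notin> D}"
  show e: "?P1 = Suc ` D"
  proof (intro equalityI subsetI)
    fix y assume "y \<in> ?P1" then show "y \<in> Suc ` D"
      by (intro image_eqI[of _ _ "y - 1"]) auto
  qed (use assms in auto)
  have eq: "{1..<L} = ?P1 \<union> ?P2" by auto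
  have dj: "?P1 \<inter> ?P2 = {}" by auto
  have f: "finite ?P1" "finite ?P2" by (auto intro: finite_subset[of _ "{..<L}"])
  have "L - 1 = card {1..<L}" by simp
  also have "\<dots> = card (?P1 \<union> ?P2)" using eq by simp
  also have "\<dots> = card ?P1 + card ?P2" using card_Un_disjoint[OF f dj] .
  finally have c1: "L - 1 = card ?P1 + card ?P2" .
  have "card ?P1 = card D" unfolding e by (simp add: card_image)
  then show "card ?P2 = L - 1 - card D" using c1 by linarith
qed


lemma desc_bound: "j \<in> descents s \<Longrightarrow> Suc j < length s"
  by (simp add: descents_def)

lemma case_end:
  assumes "0 < q" "length s = Suc N" "\<forall>x\<in>set s. x < m"
  shows "des (ins m (Suc N) s) = des s"
    and "Wt a b q (Suc N) (ins m (Suc N) s) = Wt a b q N s * qint q b"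
proof -
  have i: "Suc N \<le> length s" using assms by simp
  have nd: "\<not> (0 < Suc N \<and> Suc N - 1 \<in> descents s)" using desc_bound[of N s] assms(2) by auto
  have e: "{j\<in>descents s. Suc N \<le> j} = {}" using desc_bound[of _ s] assms(2) by fastforce
  show d: "des (ins m (Suc N) s) = des s" using des_ins[OF i assms(3)] nd assms(2) by simp
  have mj: "maj (ins m (Suc N) s) = maj s" using maj_ins[OF i assms(3)] nd assms(2) e by simp
  have lr: "lrmin (ins m (Suc N) s) = lrmin s + 0" using lrmin_ins[OF i assms(3)] by simp
  have rl: "rlmin (ins m (Suc N) s) = rlmin s + 1" using rlmin_ins[OF i assms(3)] assms(2) by simp
  have ne: "s \<noteq> []" using assms(2) by auto
  have "majt a b (Suc N) (ins m (Suc N) s) = majt a b N s + 0"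
    unfolding majt_diff[of a b N _ s] d mj lr rl by simp
  from Wt_step[OF assms(1) LR_ne[OF ne] RL_ne[OF ne] lr rl this]
  show "Wt a b q (Suc N) (ins m (Suc N) s) = Wt a b q N s * qint q b" using assms(1) by simp
qed

lemma case_front:
  assumes "0 < q" "length s = Suc N" "\<forall>x\<in>set s. x < m"
  shows "des (ins m 0 s) = Suc (des s)"
    and "Wt a b q (Suc N) (ins m 0 s) = Wt a b q N s * qint q a * q powr (b + real (des s))"
proof -
  have i: "0 \<le> length s" using assms by simp
  show d: "des (ins m 0 s) = Suc (des s)" using des_ins[OF i assms(3)] assms(2) by simp
  have mj: "maj (ins m 0 s) = maj s + 1 + des s" using maj_ins[OF i assms(3)] assms(2) by (simp add: des_def)
  have lr: "lrmin (ins m 0 s) = lrmin s + 1" using lrmin_ins[OF i assms(3)] by simp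
  have rl: "rlmin (ins m 0 s) = rlmin s + 0" using rlmin_ins[OF i assms(3)] assms(2) by simp
  have ne: "s \<noteq> []" using assms(2) by auto
  have "majt a b (Suc N) (ins m 0 s) = majt a b N s + (b + real (des s))"
    unfolding majt_diff[of a b N _ s] d mj lr rl by (simp add: algebra_simps)
  from Wt_step[OF assms(1) LR_ne[OF ne] RL_ne[OF ne] lr rl this]
  show "Wt a b q (Suc N) (ins m 0 s) = Wt a b q N s * qint q a * q powr (b + real (des s))" by simp
qed

lemma case_desc:
  assumes "0 < q" "length s = Suc N" "\<forall>x\<in>set s. x < m" "0 < i" "i < Suc N" "i - 1 \<in> descents s"
  shows "des (ins m i s) = des s"
    and "Wt a b q (Suc N) (ins m i s) = Wt a b q N s * q powr (b + real (card {j\<in>descents s. i \<le> j}))"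
proof -
  have i: "i \<le> length s" using assms by simp
  show d: "des (ins m i s) = des s" using des_ins[OF i assms(3)] assms by simp
  have mj: "maj (ins m i s) = maj s + 1 + card {j\<in>descents s. i \<le> j}" using maj_ins[OF i assms(3)] assms by simp
  have lr: "lrmin (ins m i s) = lrmin s + 0" using lrmin_ins[OF i assms(3)] assms by simp
  have rl: "rlmin (ins m i s) = rlmin s + 0" using rlmin_ins[OF i assms(3)] assms by simp
  have ne: "s \<noteq> []" using assms(2) by auto
  have "majt a b (Suc N) (ins m i s) = majt a b N s + (b + real (card {j\<in>descents s. i \<le> j}))"
    unfolding majt_diff[of a b N _ s] d mj lr rl by (simp add: algebra_simps)
  from Wt_step[OF assms(1) LR_ne[OF ne] RL_ne[OF ne] lr rl this]
  show "Wt a b q (Suc N) (ins m i s) = Wt a b q N s * q powr (b + real (card {j\<in>descents s. i \<le> j}))" by simp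
qed

lemma case_asc:
  assumes "0 < q" "length s = Suc N" "\<forall>x\<in>set s. x < m" "0 < i" "i < Suc N" "i - 1 \<notin> descents s"
  shows "des (ins m i s) = Suc (des s)"
    and "Wt a b q (Suc N) (ins m i s) = Wt a b q N s *
       q powr (a + b + real (des s) + real (card {y. 0 < y \<and> y < i \<and> y - 1 \<notin> descents s}))"
proof -
  have i: "i \<le> length s" using assms by simp
  show d: "des (ins m i s) = Suc (des s)" using des_ins[OF i assms(3)] assms by simp
  have mj: "maj (ins m i s) = maj s + Suc i + card {j\<in>descents s. i \<le> j}" using maj_ins[OF i assms(3)] assms by simp
  have ar: "i + card {j\<in>descents s. i \<le> j} = des s + 1 + card {y. 0 < y \<and> y < i \<and> y - 1 \<notin> descents s}"
    using asc_rank[OF finite_descents assms(4) assms(6)] unfolding des_def .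
  have lr: "lrmin (ins m i s) = lrmin s + 0" using lrmin_ins[OF i assms(3)] assms by simp
  have rl: "rlmin (ins m i s) = rlmin s + 0" using rlmin_ins[OF i assms(3)] assms by simp
  have ne: "s \<noteq> []" using assms(2) by auto
  have "real (maj (ins m i s)) - real (maj s) = real (des s) + 2 + real (card {y. 0 < y \<and> y < i \<and> y - 1 \<notin> descents s})"
    using mj ar by simp
  then have "majt a b (Suc N) (ins m i s) = majt a b N s + (a + b + real (des s) + real (card {y. 0 < y \<and> y < i \<and> y - 1 \<notin> descents s}))"
    unfolding majt_diff[of a b N _ s] d lr rl by (simp add: algebra_simps)
  from Wt_step[OF assms(1) LR_ne[OF ne] RL_ne[OF ne] lr rl this]
  show "Wt a b q (Suc N) (ins m i s) = Wt a b q N s *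
       q powr (a + b + real (des s) + real (card {y. 0 < y \<and> y < i \<and> y - 1 \<notin> descents s}))" by simp
qed


lemma per_sigma:
  assumes q: "0 < q" "q \<noteq> 1" and s: "length s = Suc N" "\<forall>x\<in>set s. x < m"
  shows "(\<Sum>i\<in>{0..Suc N}. if des (ins m i s) = k then Wt a b q (Suc N) (ins m i s) else 0)
    = Wt a b q N s * ((if des s = k then qint q (real k + b) else 0)
       + (if k = Suc (des s) then q powr (b + real (des s)) * qint q (real N - real (des s) + a) else 0))"
proof -
  define D where "D = descents s"
  define d where "d = des s"
  define W where "W = Wt a b q N s"
  define Dg where "Dg = {y. 0 < y \<and> y < Suc N \<and> y - 1 \<in> D}"
  define As where "As = {y. 0 < y \<and> y < Suc N \<and> y - 1 \<notin> D}"
  define F where "F i = (if des (ins m i s) = k then Wt a b q (Suc N) (ins m i s) else 0)" for i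
  have finD: "finite D" unfolding D_def by (rule finite_descents)
  have Dlt: "\<forall>j\<in>D. Suc j < Suc N" unfolding D_def using desc_bound[of _ s] s(1) by auto
  have dD: "d = card D" unfolding d_def D_def des_def ..
  have dN: "d \<le> N"
  proof -
    have "D \<subseteq> {..<N}" using Dlt by auto
    then show ?thesis unfolding dD by (metis card_lessThan card_mono finite_lessThan)
  qed
  have cAs: "card As = N - d" unfolding As_def using card_asc(1)[OF finD Dlt] dD by simp
  have Dg_eq: "Dg = Suc ` D" unfolding Dg_def using card_asc(2)[OF finD Dlt] .
  have finAs: "finite As" unfolding As_def by (auto intro: finite_subset[of _ "{..<Suc N}"])
  have finDg: "finite Dg" unfolding Dg_eq using finD by simp
  have split: "{0..Suc N} = insert 0 (insert (Suc N) (As \<union> Dg))" unfolding As_def Dg_def by auto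
  have tot: "sum F {0..Suc N} = F 0 + (F (Suc N) + (sum F As + sum F Dg))"
    unfolding split
    apply (subst sum.insert)
      apply (simp add: finAs finDg)
     apply (simp add: As_def Dg_def)
    apply (subst sum.insert)
      apply (simp add: finAs finDg)
     apply (simp add: As_def Dg_def)
    apply (subst sum.union_disjoint)
       apply (simp_all add: finAs finDg)
    apply (auto simp: As_def Dg_def)
    done
  have F0: "F 0 = (if k = Suc d then W * qint q a * q powr (b + real d) else 0)"
    unfolding F_def W_def d_def using case_front[OF q(1) s] by auto
  have FL: "F (Suc N) = (if d = k then W * qint q b else 0)"
    unfolding F_def W_def d_def using case_end[OF q(1) s] by auto
  have FDg: "sum F Dg = (if d = k then W * (\<Sum>c<d. q powr (b + real c)) else 0)"
  proof -
    have "sum F Dg = sum (\<lambda>i. if d = k then W * q powr (b + real (card {j\<in>D. i \<le> j})) else 0) Dg"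
    proof (rule sum.cong)
      fix i assume "i \<in> Dg"
      then have "0 < i" "i < Suc N" "i - 1 \<in> descents s" unfolding Dg_def D_def by auto
      from case_desc[OF q(1) s this] show "F i = (if d = k then W * q powr (b + real (card {j\<in>D. i \<le> j})) else 0)"
        unfolding F_def W_def d_def D_def by simp
    qed simp
    also have "\<dots> = (if d = k then W * (\<Sum>i\<in>Dg. q powr (b + real (card {j\<in>D. i \<le> j}))) else 0)"
      by (simp add: sum_distrib_left)
    also have "(\<Sum>i\<in>Dg. q powr (b + real (card {j\<in>D. i \<le> j}))) = (\<Sum>x\<in>D. q powr (b + real (card {j\<in>D. x < j})))"
    proof -
      have "(\<Sum>i\<in>Dg. q powr (b + real (card {j\<in>D. i \<le> j}))) = (\<Sum>x\<in>D. q powr (b + real (card {j\<in>D. Suc x \<le> j})))"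
        unfolding Dg_eq by (subst sum.reindex) auto
      also have "\<dots> = (\<Sum>x\<in>D. q powr (b + real (card {j\<in>D. x < j})))"
        by (rule sum.cong) (auto simp: Suc_le_eq)
      finally show ?thesis .
    qed
    also have "(\<Sum>x\<in>D. q powr (b + real (card {j\<in>D. x < j}))) = (\<Sum>c<d. q powr (b + real c))"
      unfolding dD using sum.reindex_bij_betw[OF rank_gt_bij[OF finD], of "\<lambda>c. q powr (b + real c)"] .
    finally show ?thesis .
  qed
  have FAs: "sum F As = (if k = Suc d then W * (\<Sum>c<N - d. q powr (a + b + real d + real c)) else 0)"
  proof -
    have "sum F As = sum (\<lambda>i. if k = Suc d then W * q powr (a + b + real d + real (card {y\<in>As. y < i})) else 0) As"
    proof (rule sum.cong)
      fix i assume "i \<in> As"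
      then have i: "0 < i" "i < Suc N" "i - 1 \<notin> descents s" unfolding As_def D_def by auto
      have "{y. 0 < y \<and> y < i \<and> y - 1 \<notin> descents s} = {y\<in>As. y < i}"
        using i unfolding As_def D_def by auto
      with case_asc[OF q(1) s i] show "F i = (if k = Suc d then W * q powr (a + b + real d + real (card {y\<in>As. y < i})) else 0)"
        unfolding F_def W_def d_def by auto
    qed simp
    also have "\<dots> = (if k = Suc d then W * (\<Sum>i\<in>As. q powr (a + b + real d + real (card {y\<in>As. y < i}))) else 0)"
      by (simp add: sum_distrib_left)
    also have "(\<Sum>i\<in>As. q powr (a + b + real d + real (card {y\<in>As. y < i}))) = (\<Sum>c<N - d. q powr (a + b + real d + real c))"
      unfolding cAs[symmetric] using sum.reindex_bij_betw[OF rank_lt_bij[OF finAs], of "\<lambda>c. q powr (a + b + real d + real c)"] .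
    finally show ?thesis .
  qed
  have Q1: "qint q b + (\<Sum>c<d. q powr (b + real c)) = qint q (real d + b)"
    using qint_step[OF q, of b d] .
  have Q2: "qint q a * q powr (b + real d) + (\<Sum>c<N - d. q powr (a + b + real d + real c))
      = q powr (b + real d) * qint q (real N - real d + a)"
  proof -
    have "(\<Sum>c<N - d. q powr (a + b + real d + real c)) = q powr (b + real d) * (\<Sum>c<N - d. q powr (a + real c))"
      by (simp add: sum_distrib_left powr_add[symmetric] algebra_simps)
    moreover have "qint q (real N - real d + a) = qint q a + (\<Sum>c<N - d. q powr (a + real c))"
    proof -
      have rr: "real N - real d + a = real (N - d) + a" using dN by simp
      show ?thesis unfolding rr using qint_step[OF q, of a "N - d"] by simp
    qed
    ultimately show ?thesis by (simp add: algebra_simps)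
  qed
  have lhs: "(\<Sum>i\<in>{0..Suc N}. if des (ins m i s) = k then Wt a b q (Suc N) (ins m i s) else 0) = sum F {0..Suc N}"
    unfolding F_def ..
  show ?thesis
  proof (cases "d = k")
    case True
    then have "k \<noteq> Suc d" by simp
    then have "sum F {0..Suc N} = W * (qint q b + (\<Sum>c<d. q powr (b + real c)))"
      unfolding tot F0 FL FAs FDg using True by (simp add: algebra_simps)
    then show ?thesis unfolding lhs Q1 using True \<open>k \<noteq> Suc d\<close> unfolding W_def d_def by simp
  next
    case False
    show ?thesis
    proof (cases "k = Suc d")
      case True
      then have "sum F {0..Suc N} = W * (qint q a * q powr (b + real d) + (\<Sum>c<N - d. q powr (a + b + real d + real c)))"
        unfolding tot F0 FL FAs FDg using False by (simp add: algebra_simps)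
      then show ?thesis unfolding lhs Q2 using True False unfolding W_def d_def by simp
    next
      case False2: False
      then have "sum F {0..Suc N} = 0"
        unfolding tot F0 FL FAs FDg using False by simp
      then show ?thesis unfolding lhs using False False2 unfolding W_def d_def by simp
    qed
  qed
qed


definition G :: "real \<Rightarrow> real \<Rightarrow> real \<Rightarrow> nat \<Rightarrow> nat \<Rightarrow> real" where
  "G a b q n k = (\<Sum>s\<in>{s\<in>permutations_of_set {1..n+1}. des s = k}. Wt a b q n s)"

lemma G_0: "0 < q \<Longrightarrow> G a b q 0 k = (if k = 0 then 1 else 0)"
proof -
  assume q: "0 < q"
  have P: "permutations_of_set {1..0+1} = {[1::nat]}" by simp
  have d: "des [1] = 0" by (simp add: des_def descents_def)
  have "LR [1] = {0}" by (auto simp: LR_def)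
  then have lr: "lrmin [1] = 1" by (simp add: lrmin_LR)
  have "RL [1] = {0}" by (auto simp: RL_def)
  then have rl: "rlmin [1] = 1" by (simp add: rlmin_RL)
  have mj: "maj [1] = 0" by (simp add: maj_def descents_def)
  have "majt a b 0 [1] = 0" unfolding majt_def d lr rl mj by simp
  then have "Wt a b q 0 [1] = 1" unfolding Wt_def lr rl using q by simp
  moreover have "{s\<in>{[1::nat]}. des s = k} = (if k = 0 then {[1]} else {})" using d by auto
  ultimately show ?thesis unfolding G_def P by simp
qed

lemma G_Suc:
  assumes q: "0 < q" "q \<noteq> 1"
  shows "G a b q (Suc n) k = (if k = 0 then 0 else q powr (b + real k - 1) * qint q (real (Suc n) - real k + a) * G a b q n (k - 1))
     + qint q (real k + b) * G a b q n k"
proof -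
  let ?P = "permutations_of_set {1..Suc n}"
  let ?H = "\<lambda>t. if des t = k then Wt a b q (Suc n) t else 0"
  let ?C = "\<lambda>d. q powr (b + real d) * qint q (real n - real d + a)"
  have "G a b q (Suc n) k = sum ?H (permutations_of_set {1..Suc (Suc n)})"
    unfolding G_def by (simp add: sum.inter_filter)
  also have "\<dots> = sum (\<lambda>x. ?H ((\<lambda>(s,i). ins (Suc (Suc n)) i s) x)) (?P \<times> {0..Suc n})"
    using sum.reindex_bij_betw[OF perm_ins_bij[of "Suc n"], of ?H] by simp
  also have "\<dots> = (\<Sum>(s,i)\<in>?P \<times> {0..Suc n}. ?H (ins (Suc (Suc n)) i s))"
    by (rule sum.cong) auto
  also have "\<dots> = (\<Sum>s\<in>?P. \<Sum>i\<in>{0..Suc n}. ?H (ins (Suc (Suc n)) i s))"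
    by (rule sum.cartesian_product[symmetric])
  also have "\<dots> = (\<Sum>s\<in>?P. Wt a b q n s * ((if des s = k then qint q (real k + b) else 0)
       + (if k = Suc (des s) then ?C (des s) else 0)))"
  proof (rule sum.cong)
    fix s assume "s \<in> ?P"
    then have "set s = {1..Suc n}" "distinct s" by (auto simp: permutations_of_set_def)
    then have "length s = Suc n" "\<forall>x\<in>set s. x < Suc (Suc n)" using distinct_card[of s] by auto
    from per_sigma[OF q this, of k a b]
    show "(\<Sum>i\<in>{0..Suc n}. ?H (ins (Suc (Suc n)) i s)) = Wt a b q n s * ((if des s = k then qint q (real k + b) else 0)
       + (if k = Suc (des s) then ?C (des s) else 0))" by simp
  qed simp
  also have "\<dots> = (\<Sum>s\<in>?P. (if des s = k then qint q (real k + b) * Wt a b q n s else 0)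
      + (if k = Suc (des s) then ?C (des s) * Wt a b q n s else 0))"
    by (rule sum.cong) (auto simp: algebra_simps)
  also have "\<dots> = (\<Sum>s\<in>?P. if des s = k then qint q (real k + b) * Wt a b q n s else 0)
      + (\<Sum>s\<in>?P. if k = Suc (des s) then ?C (des s) * Wt a b q n s else 0)"
    by (rule sum.distrib)
  also have "(\<Sum>s\<in>?P. if des s = k then qint q (real k + b) * Wt a b q n s else 0)
      = qint q (real k + b) * (\<Sum>s\<in>?P. if des s = k then Wt a b q n s else 0)"
    unfolding sum_distrib_left by (rule sum.cong) auto
  also have "(\<Sum>s\<in>?P. if des s = k then Wt a b q n s else 0) = G a b q n k"
    unfolding G_def by (simp add: sum.inter_filter)
  also have "(\<Sum>s\<in>?P. if k = Suc (des s) then ?C (des s) * Wt a b q n s else 0)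
     = (if k = 0 then 0 else ?C (k - 1) * G a b q n (k - 1))"
  proof (cases k)
    case 0 then show ?thesis by simp
  next
    case (Suc k')
    have "(\<Sum>s\<in>?P. if k = Suc (des s) then ?C (des s) * Wt a b q n s else 0)
        = (\<Sum>s\<in>?P. if des s = k' then ?C k' * Wt a b q n s else 0)"
      by (rule sum.cong) (auto simp: Suc)
    also have "\<dots> = ?C k' * G a b q n k'"
      unfolding G_def sum_distrib_left by (simp add: sum.inter_filter)
    finally show ?thesis using Suc by simp
  qed
  also have "(if k = 0 then 0 else ?C (k - 1) * G a b q n (k - 1))
     = (if k = 0 then 0 else q powr (b + real k - 1) * qint q (real (Suc n) - real k + a) * G a b q n (k - 1))"
  proof (cases k)
    case (Suc k')
    have "b + real k' = b + real k - 1" "real n - real k' + a = real (Suc n) - real k + a" using Suc by simp_all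
    then show ?thesis using Suc by simp
  qed simp
  finally show ?thesis by (simp add: algebra_simps)
qed

lemma E_G: "0 < q \<Longrightarrow> q \<noteq> 1 \<Longrightarrow> E a b q n k = G a b q n k"
proof (induction n arbitrary: k)
  case 0 then show ?case by (simp add: G_0)
next
  case (Suc n)
  then show ?case by (simp add: G_Suc)
qed

theorem theorem1p1:
  fixes a b q :: real and n k :: nat
  assumes "0 < q" and "q \<noteq> 1" and "k \<le> n"
  shows "E a b q n k =
    (\<Sum>s\<in>{s\<in>permutations_of_set {1..n+1}. des s = k}.
        qint q a ^ (lrmin s - 1) * qint q b ^ (rlmin s - 1) * q powr (majt a b n s))"
  using E_G[OF assms(1,2)] unfolding G_def Wt_def by simp


end
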